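(* Let $\Omega\subset\mathbb{R}^2$ be open and bounded and let $(y^l)_l\subset L^1(\Omega)$ satisfy $\big|\Omega\setminus\bigcup_{n\in\mathbb{N}}\bigcap_{l\ge n}\{|y^n-y^l|\le1\}\big|=0$. Then there is a (not relabeled) subsequence and an increasing continuous function $\psi:[0,\infty)\to[0,\infty)$ with $\lim_{t\to\infty}\psi(t)=\infty$ such that $\int_\Omega\psi(|y^l|)\le C$ for a constant $C>0$ independent of $l$.
   Context: $|\cdot|$ denotes Lebesgue measure. *)

theory Defs
  imports "HOL-Analysis.Analysis"
begin

end

theory Submission imports Defs "HOL-Analysis.Analysis" begin

definition ramp :: "real \<Rightarrow> real \<Rightarrow> real" where
  "ramp c t = min 1 (max 0 (t - c))"

lemma ramp_cont: "continuous_on S (ramp c)"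
  unfolding ramp_def by (intro continuous_intros)

lemma ramp_nonneg: "0 \<le> ramp c t" and ramp_le1: "ramp c t \<le> 1"
  by (auto simp: ramp_def)

lemma ramp_mono: "s \<le> t \<Longrightarrow> ramp c s \<le> ramp c t"
  by (auto simp: ramp_def)

lemma ramp_zero: "t \<le> c \<Longrightarrow> ramp c t = 0"
  by (auto simp: ramp_def)

lemma ramp_one: "c + 1 \<le> t \<Longrightarrow> ramp c t = 1"
  by (auto simp: ramp_def)

lemma psi_fin:
  assumes c: "\<And>k. real k \<le> c k" and t: "t \<le> real K"
  shows "(\<Sum>k. ramp (c k) t) = (\<Sum>k<K. ramp (c k) t)"
    and "summable (\<lambda>k. ramp (c k) t)"
proof -
  have z: "ramp (c k) t = 0" if "k \<notin> {..<K}" for k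
    using that c[of k] t by (intro ramp_zero) auto
  show "(\<Sum>k. ramp (c k) t) = (\<Sum>k<K. ramp (c k) t)"
    by (rule suminf_finite) (use z in auto)
  show "summable (\<lambda>k. ramp (c k) t)"
    by (rule summable_finite[of "{..<K}"]) (use z in auto)
qed

lemma psi_summable:
  assumes c: "\<And>k. real k \<le> c k"
  shows "summable (\<lambda>k. ramp (c k) t)"
  using psi_fin(2)[OF c, of t "nat \<lceil>t\<rceil>"] by linarith

lemma psi_cont:
  assumes c: "\<And>k. real k \<le> c k"
  shows "continuous_on UNIV (\<lambda>t. \<Sum>k. ramp (c k) t)"
proof -
  have U: "UNIV = (\<Union>K\<in>UNIV. {..<real K})"
    using reals_Archimedean2 by auto
  have "continuous_on (\<Union>K\<in>UNIV. {..<real K}) (\<lambda>t. \<Sum>k. ramp (c k) t)"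
  proof (rule continuous_on_open_UN)
    fix K :: nat
    show "open {..<real K}" by simp
    have "continuous_on {..<real K} (\<lambda>t. \<Sum>k<K. ramp (c k) t)"
      by (intro continuous_intros ramp_cont)
    moreover have "(\<Sum>k<K. ramp (c k) x) = (\<Sum>k. ramp (c k) x)" if "x \<in> {..<real K}" for x
      using psi_fin(1)[OF c, of x K] that by simp
    ultimately show "continuous_on {..<real K} (\<lambda>t. \<Sum>k. ramp (c k) t)"
      by (rule continuous_on_eq)
  qed
  then show ?thesis using U by simp
qed

lemma psi_mono:
  assumes c: "\<And>k. real k \<le> c k" and "s \<le> t"
  shows "(\<Sum>k. ramp (c k) s) \<le> (\<Sum>k. ramp (c k) t)"
  by (intro suminf_le psi_summable[OF c] ramp_mono assms)

lemma psi_nonneg: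
  assumes c: "\<And>k. real k \<le> c k"
  shows "0 \<le> (\<Sum>k. ramp (c k) t)"
  by (intro suminf_nonneg psi_summable[OF c] ramp_nonneg)

lemma psi_lim:
  assumes c: "\<And>k. real k \<le> c k"
  shows "filterlim (\<lambda>t. \<Sum>k. ramp (c k) t) at_top at_top"
unfolding filterlim_at_top
proof
  fix Z :: real
  define K where "K = nat \<lceil>Z\<rceil>"
  have "\<forall>t\<ge>(\<Sum>k<K. c k) + 1. Z \<le> (\<Sum>k. ramp (c k) t)"
  proof (intro allI impI)
    fix t assume t: "(\<Sum>k<K. c k) + 1 \<le> t"
    have "c k + 1 \<le> t" if "k < K" for k
    proof -
      have "c k \<le> (\<Sum>k<K. c k)"
        using that c by (intro member_le_sum) (auto intro: order_trans[OF of_nat_0_le_iff])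
      then show ?thesis using t by linarith
    qed
    then have "(\<Sum>k<K. ramp (c k) t) = real K" by (simp add: ramp_one)
    moreover have "(\<Sum>k<K. ramp (c k) t) \<le> (\<Sum>k. ramp (c k) t)"
      by (rule sum_le_suminf[OF psi_summable[OF c]]) (auto simp: ramp_nonneg)
    ultimately show "Z \<le> (\<Sum>k. ramp (c k) t)" unfolding K_def by linarith
  qed
  then show "eventually (\<lambda>t. Z \<le> (\<Sum>k. ramp (c k) t)) at_top"
    unfolding eventually_at_top_linorder by blast
qed

theorem lemma4p2:
  fixes \<Omega> :: "(real^2) set" and y :: "nat \<Rightarrow> real^2 \<Rightarrow> real"
  assumes "open \<Omega>" and "bounded \<Omega>"
    and "\<And>l. set_integrable lebesgue \<Omega> (y l)"
    and "\<Omega> - (\<Union>n. \<Inter>l\<in>{n..}. {x. \<bar>y n x - y l x\<bar> \<le> 1}) \<in> null_sets lebesgue"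
  shows "\<exists>(r::nat \<Rightarrow> nat) (\<psi>::real \<Rightarrow> real) (C::real). strict_mono r
           \<and> continuous_on {0..} \<psi> \<and> mono_on {0..} \<psi> \<and> \<psi> ` {0..} \<subseteq> {0..}
           \<and> filterlim \<psi> at_top at_top
           \<and> C > 0
           \<and> (\<forall>l. (\<integral>\<^sup>+ x\<in>\<Omega>. ennreal (\<psi> \<bar>y (r l) x\<bar>) \<partial>lebesgue) \<le> ennreal C)"
proof -
  define N where "N = \<Omega> - (\<Union>n. \<Inter>l\<in>{n..}. {x. \<bar>y n x - y l x\<bar> \<le> 1})"
  have N: "N \<in> null_sets lebesgue" using assms(4) N_def by simp
  have Om: "\<Omega> \<in> sets lebesgue" "emeasure lebesgue \<Omega> \<noteq> \<infinity>"
    using lmeasurable_open[OF assms(2,1)] by (auto simp: fmeasurable_def)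
  define f where "f l x = indicator \<Omega> x *\<^sub>R y l x" for l x
  have fm: "f l \<in> borel_measurable lebesgue" for l
    using assms(3)[of l] unfolding set_integrable_def f_def by (rule borel_measurable_integrable)
  define A where "A m = {x\<in>\<Omega>. \<exists>l. real m < \<bar>y l x\<bar>}" for m :: nat
  have A_eq: "A m = \<Omega> \<inter> (\<Union>l. {x\<in>space lebesgue. real m < \<bar>f l x\<bar>})" for m
    by (auto simp: A_def f_def)
  have Asets: "A m \<in> sets lebesgue" for m
    unfolding A_eq using fm Om by measurable
  have dec: "decseq A"
    unfolding decseq_def A_def
    by (auto intro: order.strict_trans1[rotated] simp del: of_nat_le_iff) (meson le_less_trans of_nat_le_iff)
  have fin: "emeasure lebesgue (A m) \<noteq> \<infinity>" for m
    using emeasure_mono[OF _ Om(1), of "A m"] Om(2) by (auto simp: A_def top_unique)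
  have sub: "(\<Inter>m. A m) \<subseteq> N"
  proof
    fix x assume x: "x \<in> (\<Inter>m. A m)"
    then have xO: "x \<in> \<Omega>" by (auto simp: A_def)
    show "x \<in> N"
    proof (rule ccontr)
      assume "x \<notin> N"
      then obtain n where n: "\<And>l. l \<ge> n \<Longrightarrow> \<bar>y n x - y l x\<bar> \<le> 1"
        using xO by (auto simp: N_def)
      define B where "B = (\<Sum>l\<le>n. \<bar>y l x\<bar>) + 1"
      have bnd: "\<bar>y l x\<bar> \<le> B" for l
      proof (cases "l \<le> n")
        case True
        have "\<bar>y l x\<bar> \<le> (\<Sum>l\<le>n. \<bar>y l x\<bar>)"
          using True by (intro member_le_sum) auto
        then show ?thesis unfolding B_def by linarith
      next
        case False
        have "\<bar>y n x\<bar> \<le> (\<Sum>l\<le>n. \<bar>y l x\<bar>)"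
          by (intro member_le_sum) auto
        moreover have "\<bar>y n x - y l x\<bar> \<le> 1" using False n by auto
        ultimately show ?thesis unfolding B_def by linarith
      qed
      from x have "x \<in> A (nat \<lceil>B\<rceil>)" by blast
      then obtain l where "real (nat \<lceil>B\<rceil>) < \<bar>y l x\<bar>" by (auto simp: A_def)
      with bnd[of l] show False by linarith
    qed
  qed
  have "(\<Inter>m. A m) \<in> null_sets lebesgue"
    by (rule null_sets_subset[OF N _ sub]) (use Asets in auto)
  then have z: "emeasure lebesgue (\<Inter>m. A m) = 0" by (rule null_setsD1)
  have "range A \<subseteq> sets lebesgue" using Asets by auto
  from Lim_emeasure_decseq[OF this dec fin] z
  have lim: "(\<lambda>m. emeasure lebesgue (A m)) \<longlonglongrightarrow> 0" by simp
  have ex: "\<exists>m. k \<le> m \<and> emeasure lebesgue (A m) < ennreal ((1/2)^k)" for k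
  proof -
    have "eventually (\<lambda>m. emeasure lebesgue (A m) < ennreal ((1/2)^k)) sequentially"
      by (rule order_tendstoD(2)[OF lim]) simp
    then obtain M where "\<And>m. m \<ge> M \<Longrightarrow> emeasure lebesgue (A m) < ennreal ((1/2)^k)"
      unfolding eventually_sequentially by blast
    then show ?thesis by (intro exI[of _ "max M k"]) auto
  qed
  define t where "t k = (SOME m. k \<le> m \<and> emeasure lebesgue (A m) < ennreal ((1/2)^k))" for k
  have t: "k \<le> t k" "emeasure lebesgue (A (t k)) < ennreal ((1/2)^k)" for k
    using someI_ex[OF ex[of k]] unfolding t_def by auto
  define c where "c k = real (t k)" for k
  have c: "real k \<le> c k" for k using t(1)[of k] by (simp add: c_def)
  define \<psi> where "\<psi> s = (\<Sum>k. ramp (c k) s)" for s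
  have int: "(\<integral>\<^sup>+ x\<in>\<Omega>. ennreal (\<psi> \<bar>y l x\<bar>) \<partial>lebesgue) \<le> ennreal 2" for l
  proof -
    have pw: "ennreal (\<psi> \<bar>y l x\<bar>) * indicator \<Omega> x \<le> (\<Sum>k. indicator (A (t k)) x)" for x
    proof (cases "x \<in> \<Omega>")
      case True
      have "ennreal (\<psi> \<bar>y l x\<bar>) = (\<Sum>k. ennreal (ramp (c k) \<bar>y l x\<bar>))"
        unfolding \<psi>_def by (rule suminf_ennreal2[symmetric]) (auto simp: ramp_nonneg psi_summable[OF c])
      also have "\<dots> \<le> (\<Sum>k. indicator (A (t k)) x)"
      proof (rule suminf_le)
        fix k
        show "ennreal (ramp (c k) \<bar>y l x\<bar>) \<le> indicator (A (t k)) x"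
        proof (cases "c k < \<bar>y l x\<bar>")
          case True
          then have "x \<in> A (t k)" using \<open>x \<in> \<Omega>\<close> by (auto simp: A_def c_def)
          then show ?thesis by (simp add: ramp_le1)
        next
          case False
          then show ?thesis by (simp add: ramp_zero)
        qed
      qed auto
      finally show ?thesis using True by simp
    qed simp
    have "(\<integral>\<^sup>+ x\<in>\<Omega>. ennreal (\<psi> \<bar>y l x\<bar>) \<partial>lebesgue) \<le> (\<integral>\<^sup>+ x. (\<Sum>k. indicator (A (t k)) x) \<partial>lebesgue)"
      by (rule nn_integral_mono) (use pw in auto)
    also have "\<dots> = (\<Sum>k. (\<integral>\<^sup>+ x. indicator (A (t k)) x \<partial>lebesgue))"
      by (rule nn_integral_suminf) (use Asets in auto)
    also have "\<dots> = (\<Sum>k. emeasure lebesgue (A (t k)))"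
      using Asets by simp
    also have "\<dots> \<le> (\<Sum>k. ennreal ((1/2)^k))"
      by (rule suminf_le) (use t(2) in \<open>auto intro: less_imp_le\<close>)
    also have "\<dots> = ennreal (\<Sum>k. (1/2)^k)"
      by (rule suminf_ennreal2) auto
    also have "\<dots> = ennreal 2"
      using suminf_geometric[of "1/2::real"] by simp
    finally show ?thesis .
  qed
  show ?thesis
  proof (intro exI conjI allI)
    show "strict_mono (id :: nat \<Rightarrow> nat)" by (simp add: strict_mono_def)
    show "continuous_on {0..} \<psi>"
      using psi_cont[OF c] unfolding \<psi>_def by (rule continuous_on_subset) auto
    show "mono_on {0..} \<psi>"
      unfolding \<psi>_def by (intro mono_onI psi_mono[OF c])
    show "\<psi> ` {0..} \<subseteq> {0..}"
      unfolding \<psi>_def using psi_nonneg[OF c] by auto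
    show "filterlim \<psi> at_top at_top"
      unfolding \<psi>_def by (rule psi_lim[OF c])
    show "(0::real) < 2" by simp
    fix l show "(\<integral>\<^sup>+ x\<in>\<Omega>. ennreal (\<psi> \<bar>y (id l) x\<bar>) \<partial>lebesgue) \<le> ennreal 2"
      using int[of l] by simp
  qed
qed
end
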